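(* Let $q\neq0$ and $r$ be real numbers. As formal power series in $t$, \[ \sum_{n=0}^{\infty} \hat c_n^q(r)\,\frac{t^n}{n!}=\frac{q\,(1+qt)^{r/q}}{\ln(1+qt)}\Big(1-(1+qt)^{-1/q}\Big). \] In particular, for $r=0$, \[ \sum_{n=0}^{\infty} \hat c_n^q(0)\,\frac{t^n}{n!}=\frac{q}{\ln(1+qt)}\Big(1-(1+qt)^{-1/q}\Big). \]
   Context: For a real number $q\neq 0$ and an integer $n\ge0$, write $(y|q)_n=\prod_{j=0}^{n-1}(y-jq)$, with $(y|q)_0=1$. The Cauchy polynomials with a $q$ parameter of the second kind are $\hat c_n^q(z)=\int_0^1 (-x+z|q)_n\,dx$. In the formula, $(1+qt)^{a}=\exp(a\ln(1+qt))$ with $\ln(1+qt)=\sum_{m\ge1}(-1)^{m-1}(qt)^m/m$. The right-hand side is a formal power series, since $\big(1-(1+qt)^{-1/q}\big)/\ln(1+qt)$ is one. *)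

theory Defs
  imports "HOL-Analysis.Analysis" "HOL-Computational_Algebra.Formal_Power_Series"
begin

definition qfall :: "real \<Rightarrow> real \<Rightarrow> nat \<Rightarrow> real" where
  "qfall y q n = (\<Prod>j<n. (y - real j * q))"

definition cauchy2 :: "real \<Rightarrow> nat \<Rightarrow> real \<Rightarrow> real" where
  "cauchy2 q n z = integral {0..1} (\<lambda>x. qfall (- x + z) q n)"

definition fps_ln1p :: "real \<Rightarrow> real fps" where
  "fps_ln1p q = Abs_fps (\<lambda>m. if m = 0 then 0 else (-1) ^ (m - 1) * q ^ m / real m)"

definition fps_pow1p :: "real \<Rightarrow> real \<Rightarrow> real fps" where
  "fps_pow1p q a = fps_exp 1 oo (fps_const a * fps_ln1p q)"

end

theory Submission
  imports Defs
begin

unbundle no vec_syntax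
notation fps_nth (infixl \<open>$\<close> 75)

lemma qfall_Suc: "qfall y q (Suc n) = qfall y q n * (y - real n * q)"
  by (simp add: qfall_def)

lemma ode_unique:
  fixes H :: "real fps"
  assumes h0: "H $ 0 = 1"
    and ode: "(1 + fps_const q * fps_X) * fps_deriv H = fps_const c * H"
  shows "H $ n = qfall c q n / fact n"
proof (induction n)
  case 0 then show ?case using h0 by (simp add: qfall_def)
next
  case (Suc n)
  have "((1 + fps_const q * fps_X) * fps_deriv H) $ n = (fps_const c * H) $ n"
    using ode by simp
  hence "real (n+1) * H $ (n+1) + q * real n * H $ n = c * H $ n"
    by (cases n) (auto simp: algebra_simps)
  hence "H $ (Suc n) = (c - real n * q) * H $ n / real (Suc n)"
    by (simp add: field_simps)
  then show ?case using Suc.IH by (simp add: qfall_Suc field_simps)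
qed

lemma ln1p_deriv: "(1 + fps_const q * fps_X) * fps_deriv (fps_ln1p q) = fps_const q"
proof (rule fps_ext)
  fix n
  show "((1 + fps_const q * fps_X) * fps_deriv (fps_ln1p q)) $ n = fps_const q $ n"
    by (cases n) (auto simp: fps_ln1p_def field_simps)
qed

lemma pow1p_ode: "(1 + fps_const q * fps_X) * fps_deriv (fps_pow1p q a) = fps_const (a*q) * fps_pow1p q a"
proof -
  have z: "(fps_const a * fps_ln1p q) $ 0 = 0" by (simp add: fps_ln1p_def)
  have "fps_deriv (fps_pow1p q a) = fps_pow1p q a * (fps_const a * fps_deriv (fps_ln1p q))"
    unfolding fps_pow1p_def using fps_compose_deriv[OF z, of "fps_exp 1"] by simp
  then have "(1 + fps_const q * fps_X) * fps_deriv (fps_pow1p q a)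
     = fps_pow1p q a * fps_const a * ((1 + fps_const q * fps_X) * fps_deriv (fps_ln1p q))"
    by (simp add: algebra_simps flip: fps_const_add)
  also have "\<dots> = fps_pow1p q a * fps_const a * fps_const q" by (simp only: ln1p_deriv)
  also have "\<dots> = fps_const (a*q) * fps_pow1p q a" by (simp add: mult_ac)
  finally show ?thesis .
qed

lemma pow1p_0: "fps_pow1p q a $ 0 = 1"
  by (simp add: fps_pow1p_def)

lemma pow1p_nth: "fps_pow1p q a $ n = qfall (a*q) q n / fact n"
  by (rule ode_unique[OF pow1p_0 pow1p_ode])

lemma pow1p_mult: "fps_pow1p q a * fps_pow1p q b = fps_pow1p q (a+b)"
proof (rule fps_ext)
  fix n
  have "(1 + fps_const q * fps_X) * fps_deriv (fps_pow1p q a * fps_pow1p q b)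
    = ((1 + fps_const q * fps_X) * fps_deriv (fps_pow1p q a)) * fps_pow1p q b
     + fps_pow1p q a * ((1 + fps_const q * fps_X) * fps_deriv (fps_pow1p q b))"
    by (simp add: fps_deriv_mult algebra_simps)
  also have "\<dots> = fps_const (a*q) * fps_pow1p q a * fps_pow1p q b + fps_pow1p q a * (fps_const (b*q) * fps_pow1p q b)"
    by (simp only: pow1p_ode)
  also have "\<dots> = fps_const ((a+b)*q) * (fps_pow1p q a * fps_pow1p q b)"
    by (simp add: algebra_simps flip: fps_const_add)
  finally have "(fps_pow1p q a * fps_pow1p q b) $ n = qfall ((a+b)*q) q n / fact n"
    by (intro ode_unique) (simp_all add: pow1p_0)
  then show "(fps_pow1p q a * fps_pow1p q b) $ n = fps_pow1p q (a+b) $ n"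
    by (simp add: pow1p_nth)
qed

definition Dq :: "real \<Rightarrow> nat \<Rightarrow> real" where
  "Dq q k = (if k = 0 then 0 else (-q)^(k-1) * fact (k-1))"

lemma qfall_deriv0: "((\<lambda>h. qfall h q k) has_real_derivative Dq q k) (at 0)"
proof (induction k)
  case 0 then show ?case by (simp add: qfall_def Dq_def)
next
  case (Suc k)
  have d: "((\<lambda>h. qfall h q k * (h - real k * q)) has_real_derivative
       (Dq q k * (0 - real k * q) + qfall 0 q k * 1)) (at 0)"
    by (auto intro!: derivative_eq_intros Suc.IH)
  have "Dq q k * (0 - real k * q) + qfall 0 q k * 1 = Dq q (Suc k)"
  proof (cases k)
    case 0 then show ?thesis by (simp add: Dq_def qfall_def)
  next
    case (Suc m)
    have "qfall 0 q k = 0" unfolding qfall_def Suc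
      by (rule prod_zero) (auto intro: bexI[of _ 0])
    then show ?thesis using Suc by (simp add: Dq_def algebra_simps)
  qed
  with d show ?case by (simp add: qfall_Suc)
qed

lemma Dq_coef:
  assumes "q \<noteq> 0"
  shows "Dq q m / fact m = fps_ln1p q $ m / q"
proof (cases m)
  case 0 then show ?thesis by (simp add: Dq_def fps_ln1p_def)
next
  case (Suc k)
  have a: "Dq q m = (-q)^k * fact k" by (simp add: Dq_def Suc)
  have b: "(fact m :: real) = real (Suc k) * fact k" by (simp add: Suc del: of_nat_Suc)
  have "Dq q m / fact m = (-q)^k / real (Suc k)"
    unfolding a b by simp
  also have "\<dots> = (-1)^k * q^k / real (Suc k)" by (subst power_minus) (rule refl)
  also have "\<dots> = (-1)^k * (q * q^k) / real (Suc k) / q" using assms by simp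
  also have "\<dots> = fps_ln1p q $ m / q"
    by (simp add: fps_ln1p_def Suc)
  finally show ?thesis .
qed

lemma qfall_continuous: "continuous_on S (\<lambda>x. qfall (g x) q n)" if "continuous_on S g"
  unfolding qfall_def by (intro continuous_intros that)

lemma deriv_f:
  assumes q: "q \<noteq> 0"
  shows "((\<lambda>z. qfall z q n / fact n) has_real_derivative
            ((fps_pow1p q (y/q) * fps_ln1p q) $ n / q)) (at y)"
proof -
  have eq: "qfall z q n / fact n = (\<Sum>i=0..n. (qfall y q i / fact i) * (qfall (z + - y) q (n-i) / fact (n-i)))" for z
  proof -
    have "fps_pow1p q (z/q) $ n = (fps_pow1p q (y/q) * fps_pow1p q ((z - y)/q)) $ n"
      by (simp add: pow1p_mult diff_divide_distrib)
    then show ?thesis using q by (simp add: pow1p_nth fps_mult_nth)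
  qed
  have dk: "((\<lambda>z. qfall (z + - y) q k) has_real_derivative Dq q k) (at y)" for k
    using DERIV_shift[of "\<lambda>h. qfall h q k" "Dq q k" y "-y"] qfall_deriv0[of q k] by simp
  have "((\<lambda>z. \<Sum>i=0..n. (qfall y q i / fact i) * (qfall (z + - y) q (n-i) / fact (n-i)))
     has_real_derivative (\<Sum>i=0..n. (qfall y q i / fact i) * (Dq q (n-i) / fact (n-i)))) (at y)"
    by (intro DERIV_sum DERIV_cmult DERIV_cdivide dk)
  also have "(\<Sum>i=0..n. (qfall y q i / fact i) * (Dq q (n-i) / fact (n-i)))
      = (\<Sum>i=0..n. fps_pow1p q (y/q) $ i * fps_ln1p q $ (n-i)) / q"
    unfolding sum_divide_distrib using q by (intro sum.cong) (simp_all add: Dq_coef pow1p_nth)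
  also have "\<dots> = (fps_pow1p q (y/q) * fps_ln1p q) $ n / q" by (simp add: fps_mult_nth)
  finally show ?thesis by (simp add: eq)
qed

lemma key:
  assumes q: "q \<noteq> 0"
  shows "(Abs_fps (\<lambda>n. cauchy2 q n r / fact n) * fps_ln1p q) $ n
        = q * (qfall r q n / fact n) - q * (qfall (r - 1) q n / fact n)"
proof -
  define G where "G x = - q * (qfall (r - x) q n / fact n)" for x
  define G' where "G' x = (fps_pow1p q ((r - x)/q) * fps_ln1p q) $ n" for x
  have "(G has_vector_derivative G' x) (at x within {0..1})" for x
  proof -
    have dd: "((\<lambda>x. qfall (r - x) q n / fact n) has_real_derivative
           ((fps_pow1p q ((r-x)/q) * fps_ln1p q) $ n / q) * (- 1)) (at x)"
    proof -
      have g: "((\<lambda>x. r - x) has_real_derivative -1) (at x)"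
        by (auto intro!: derivative_eq_intros)
      show ?thesis
        using DERIV_chain2[where g="\<lambda>x. r - x", OF deriv_f[OF q, of n "r - x"] g] by simp
    qed
    have "(G has_real_derivative G' x) (at x)"
      unfolding G_def G'_def using DERIV_cmult[where c="-q", OF dd] q by (simp add: field_simps)
    then show ?thesis
      by (simp add: has_real_derivative_iff_has_vector_derivative has_vector_derivative_at_within)
  qed
  then have I1: "(G' has_integral (G 1 - G 0)) {0..1}"
    by (intro fundamental_theorem_of_calculus) auto
  have ci: "((\<lambda>x. qfall (- x + r) q i / fact i) has_integral cauchy2 q i r / fact i) {0..1}" for i
  proof -
    have "(\<lambda>x. qfall (- x + r) q i) integrable_on {0..1}"
      by (intro integrable_continuous_interval qfall_continuous continuous_intros)
    then show ?thesis unfolding cauchy2_def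
      by (intro has_integral_divide) (simp add: integrable_integral)
  qed
  have I0: "((\<lambda>x. \<Sum>i=0..n. (qfall (- x + r) q i / fact i) * fps_ln1p q $ (n-i)) has_integral
          (\<Sum>i=0..n. (cauchy2 q i r / fact i) * fps_ln1p q $ (n-i))) {0..1}"
    by (intro has_integral_sum has_integral_mult_left ci) auto
  have "G' x = (\<Sum>i=0..n. (qfall (- x + r) q i / fact i) * fps_ln1p q $ (n-i))" for x
    unfolding G'_def fps_mult_nth using q by (intro sum.cong) (simp_all add: pow1p_nth)
  then have eqG: "G' = (\<lambda>x. \<Sum>i=0..n. (qfall (- x + r) q i / fact i) * fps_ln1p q $ (n-i))"
    by (rule ext)
  have I2: "(G' has_integral (\<Sum>i=0..n. (cauchy2 q i r / fact i) * fps_ln1p q $ (n-i))) {0..1}"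
    unfolding eqG by (rule I0)
  have "(Abs_fps (\<lambda>n. cauchy2 q n r / fact n) * fps_ln1p q) $ n = G 1 - G 0"
    unfolding fps_mult_nth fps_nth_Abs_fps using has_integral_unique[OF I2 I1] by (simp only:)
  moreover have "G 1 - G 0 = q * (qfall r q n / fact n) - q * (qfall (r - 1) q n / fact n)"
    unfolding G_def by simp
  ultimately show ?thesis by (rule trans)
qed


lemma main_r:
  fixes q r :: real
  assumes q: "q \<noteq> 0"
  shows "Abs_fps (\<lambda>n. cauchy2 q n r / fact n)
           = fps_const q * fps_pow1p q (r / q) * ((1 - fps_pow1p q (- 1 / q)) / fps_ln1p q)"
proof -
  define C where "C = Abs_fps (\<lambda>n. cauchy2 q n r / fact n)"
  define L where "L = fps_ln1p q"
  define A where "A = 1 - fps_pow1p q (- 1 / q)"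
  have L1: "L $ 1 = q" by (simp add: L_def fps_ln1p_def)
  have L0: "L $ 0 = 0" by (simp add: L_def fps_ln1p_def)
  have Lnz: "L \<noteq> 0" using L1 q by auto
  have A0: "A $ 0 = 0" by (simp add: A_def pow1p_0)
  have sL: "subdegree L = 1" using L0 L1 q by (intro subdegreeI) auto
  have dvd: "L dvd A"
  proof (cases "A = 0")
    case True then show ?thesis by simp
  next
    case False
    have "subdegree A \<noteq> 0" using False A0 by (simp add: subdegree_eq_0_iff)
    then show ?thesis using fps_dvd_iff[OF Lnz False] sL by simp
  qed
  have prod: "fps_pow1p q (r / q) * A = fps_pow1p q (r / q) - fps_pow1p q ((r - 1) / q)"
    unfolding A_def by (simp add: algebra_simps pow1p_mult diff_divide_distrib)
  have CL: "C * L = fps_const q * (fps_pow1p q (r / q) - fps_pow1p q ((r - 1) / q))"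
  proof (rule fps_ext)
    fix n
    show "(C * L) $ n = (fps_const q * (fps_pow1p q (r / q) - fps_pow1p q ((r - 1) / q))) $ n"
    proof -
      have e1: "(r - 1) / q * q = r - 1" "r / q * q = r" using q by simp_all
      show ?thesis
        unfolding C_def L_def key[OF q] by (simp add: pow1p_nth e1 right_diff_distrib)
    qed
  qed
  have "(fps_const q * fps_pow1p q (r / q) * (A / L)) * L = fps_const q * fps_pow1p q (r / q) * (A / L * L)"
    by (simp add: mult_ac)
  also have "\<dots> = fps_const q * (fps_pow1p q (r / q) * A)"
    using dvd by (simp add: dvd_div_mult_self mult_ac)
  also have "\<dots> = C * L" by (simp add: prod CL)
  finally have "C * L = (fps_const q * fps_pow1p q (r / q) * (A / L)) * L" by (rule sym)
  then have "C = fps_const q * fps_pow1p q (r / q) * (A / L)"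
    using Lnz by (metis mult_right_cancel)
  then show ?thesis by (simp add: C_def L_def A_def)
qed

theorem mainTheorem4:
  fixes q r :: real
  assumes "q \<noteq> 0"
  shows "Abs_fps (\<lambda>n. cauchy2 q n r / fact n)
           = fps_const q * fps_pow1p q (r / q) * ((1 - fps_pow1p q (- 1 / q)) / fps_ln1p q)
         \<and> Abs_fps (\<lambda>n. cauchy2 q n 0 / fact n)
           = fps_const q * ((1 - fps_pow1p q (- 1 / q)) / fps_ln1p q)"
proof
  show "Abs_fps (\<lambda>n. cauchy2 q n r / fact n)
           = fps_const q * fps_pow1p q (r / q) * ((1 - fps_pow1p q (- 1 / q)) / fps_ln1p q)"
    by (rule main_r[OF assms])
  have P0: "fps_pow1p q (0 / q) = 1"
  proof (rule fps_ext)
    fix n show "fps_pow1p q (0 / q) $ n = 1 $ n"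
    proof (cases n)
      case (Suc m)
      have "qfall 0 q n = 0" unfolding qfall_def Suc
        by (rule prod_zero) (auto intro: bexI[of _ 0])
      then show ?thesis using Suc by (simp add: pow1p_nth)
    qed (simp add: pow1p_0)
  qed
  show "Abs_fps (\<lambda>n. cauchy2 q n 0 / fact n)
           = fps_const q * ((1 - fps_pow1p q (- 1 / q)) / fps_ln1p q)"
    using main_r[OF assms, of 0] unfolding P0 by simp
qed

end
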